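(* Let $n\ge2$ and let $\mathsf r=[r_1,\dots,r_{2n-2}]$ be a tree-like factorization of $\lambda_n$, written as $r_\ell=(\!(a_{\ell-1},a_\ell)\!)$ for integers $a_0<a_1<\dots<a_{2n-2}$. Then $a_0\equiv a_{2n-2}\equiv 0\pmod n$.
   Context: The affine symmetric group $\widetilde S_n$ is the group, under composition, of bijections $w:\mathbb Z\to\mathbb Z$ with $w(i+n)=w(i)+n$ and $\sum_{i=1}^n w(i)=\binom{n+1}{2}$. For $i\not\equiv j\pmod n$, $(\!(i,j)\!)$ is the affine reflection interchanging $i+kn$ and $j+kn$ for all $k\in\mathbb Z$; $(\!(i,j)\!)=(\!(j,i)\!)=(\!(i+kn,j+kn)\!)$. Let $\lambda_n$ be the element with $\lambda_n(k)=k+n$ for $k\not\equiv 0\pmod n$ and $\lambda_n(k)=k-n(n-1)$ for $k\equiv0\pmod n$; its reflection length (minimal number of reflections with product $\lambda_n$) is $2n-2$. $\textsc{fact}(\lambda_n)$ is the set of sequences $[r_1,\dots,r_{2n-2}]$ of reflections with $r_1r_2\cdots r_{2n-2}=\lambda_n$. Such a sequence is tree-like if one can write $r_k=(\!(a_{k-1},b_k)\!)$ with integers $a_{k-1}<b_k$ ($1\le k\le 2n-2$) such that $a_k\equiv b_k\pmod n$ ($1\le k\le 2n-3$); equivalently, after shifting representatives by multiples of $n$, there are integers $a_0<a_1<\dots<a_{2n-2}$ with $r_\ell=(\!(a_{\ell-1},a_\ell)\!)$ for all $\ell$. *)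

theory Defs
  imports Main
begin

text \<open>Affine permutations are modelled as functions int \<Rightarrow> int; the group
operation is composition, so the product r1 r2 ... rk is r1 \<circ> r2 \<circ> ... \<circ> rk.\<close>

definition aff_refl :: "nat \<Rightarrow> int \<Rightarrow> int \<Rightarrow> (int \<Rightarrow> int)" where
  "aff_refl n i j = (\<lambda>x. if x mod int n = i mod int n then x + (j - i)
                         else if x mod int n = j mod int n then x - (j - i)
                         else x)"

definition is_reflection :: "nat \<Rightarrow> (int \<Rightarrow> int) \<Rightarrow> bool" where
  "is_reflection n r \<longleftrightarrow> (\<exists>i j. i mod int n \<noteq> j mod int n \<and> r = aff_refl n i j)"

definition lambda_n :: "nat \<Rightarrow> int \<Rightarrow> int" where
  "lambda_n n = (\<lambda>k. if k mod int n \<noteq> 0 then k + int n else k - int n * (int n - 1))"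

definition list_prod :: "(int \<Rightarrow> int) list \<Rightarrow> (int \<Rightarrow> int)" where
  "list_prod rs = foldr (\<circ>) rs id"

definition fact_lambda :: "nat \<Rightarrow> (int \<Rightarrow> int) list set" where
  "fact_lambda n = {rs. length rs = 2 * n - 2 \<and> (\<forall>r\<in>set rs. is_reflection n r)
                        \<and> list_prod rs = lambda_n n}"

end

theory Submission
  imports Defs
begin

lemma refl_invol:
  assumes "is_reflection n r"
  shows "r (r x) = x"
proof -
  obtain i j where ij: "i mod int n \<noteq> j mod int n" "r = aff_refl n i j"
    using assms unfolding is_reflection_def by blast
  have A: "(x + (j - i)) mod int n = j mod int n" if "x mod int n = i mod int n"
  proof -
    have "(x + (j - i)) mod int n = (x mod int n + (j - i)) mod int n" by (simp add: mod_add_left_eq)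
    also have "\<dots> = (i mod int n + (j - i)) mod int n" using that by simp
    also have "\<dots> = (i + (j - i)) mod int n" by (simp add: mod_add_left_eq)
    finally show ?thesis by simp
  qed
  have B: "(x - (j - i)) mod int n = i mod int n" if "x mod int n = j mod int n"
  proof -
    have "(x - (j - i)) mod int n = (x mod int n - (j - i)) mod int n" by (simp add: mod_diff_left_eq)
    also have "\<dots> = (j mod int n - (j - i)) mod int n" using that by simp
    also have "\<dots> = (j - (j - i)) mod int n" by (simp add: mod_diff_left_eq)
    finally show ?thesis by simp
  qed
  show ?thesis
    using ij A B by (auto simp: aff_refl_def)
qed

lemma refl_step:
  assumes "is_reflection n (aff_refl n p q)" "p < q"
  shows "aff_refl n p q q = p"
proof (cases "q mod int n = p mod int n")
  case True
  have 1: "aff_refl n p q q = 2*q - p" using True by (simp add: aff_refl_def)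
  have "(2*q - p) mod int n = p mod int n"
  proof -
    have "(2*q - p) mod int n = (q + (q - p)) mod int n" by (simp add: algebra_simps)
    also have "\<dots> = (q mod int n + (q - p)) mod int n" by (simp add: mod_add_left_eq)
    also have "\<dots> = (p mod int n + (q - p)) mod int n" using True by simp
    also have "\<dots> = (p + (q - p)) mod int n" by (simp add: mod_add_left_eq)
    finally show ?thesis using True by simp
  qed
  hence "aff_refl n p q (2*q - p) = 3*q - 2*p" by (simp add: aff_refl_def)
  with 1 refl_invol[OF assms(1), of q] assms(2) show ?thesis by simp
next
  case False
  then show ?thesis by (simp add: aff_refl_def)
qed

lemma list_prod_snoc: "list_prod (xs @ [y]) = list_prod xs \<circ> y"
  by (induction xs) (auto simp: list_prod_def)

theorem corollary3p5:
  fixes n :: nat and rs :: "(int \<Rightarrow> int) list" and a :: "nat \<Rightarrow> int"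
  assumes "n \<ge> 2"
    and "rs \<in> fact_lambda n"
    and "\<And>l. l < 2 * n - 2 \<Longrightarrow> a l < a (Suc l)"
    and "\<And>l. 1 \<le> l \<Longrightarrow> l \<le> 2 * n - 2 \<Longrightarrow> rs ! (l - 1) = aff_refl n (a (l - 1)) (a l)"
  shows "a 0 mod int n = 0 \<and> a (2 * n - 2) mod int n = 0"
proof -
  define m where "m = 2 * n - 2"
  have len: "length rs = m" and refl: "\<forall>r\<in>set rs. is_reflection n r"
    and prod: "list_prod rs = lambda_n n"
    using assms(2) by (auto simp: fact_lambda_def m_def)
  have chain: "k \<le> m \<Longrightarrow> list_prod (take k rs) (a k) = a 0 \<and> a 0 \<le> a k" for k
  proof (induction k)
    case 0
    then show ?case by (simp add: list_prod_def)
  next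
    case (Suc k)
    have km: "k < m" using Suc by simp
    have rk: "rs ! k = aff_refl n (a k) (a (Suc k))"
      using assms(4)[of "Suc k"] Suc.prems by (simp add: m_def)
    have "is_reflection n (rs ! k)" using refl km len by simp
    hence st: "(rs ! k) (a (Suc k)) = a k"
      using rk refl_step[of n "a k" "a (Suc k)"] assms(3)[of k] km m_def by simp
    have tk: "take (Suc k) rs = take k rs @ [rs ! k]"
      using km len by (simp add: take_Suc_conv_app_nth)
    show ?case using Suc.IH km st tk assms(3)[of k] m_def by (simp add: list_prod_snoc)
  qed
  have "m \<ge> 1" using assms(1) m_def by simp
  from chain[of m] len prod have lm: "lambda_n n (a m) = a 0" by simp
  have sm: "Suc (m - 1) = m" using \<open>m \<ge> 1\<close> by simp
  have "a 0 \<le> a (m - 1)" using chain[of "m - 1"] by simp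
  moreover have "a (m - 1) < a (Suc (m - 1))" using assms(3)[of "m - 1"] \<open>m \<ge> 1\<close> m_def by simp
  ultimately have "a 0 < a m" using sm by simp
  hence z: "a m mod int n = 0"
    using lm by (simp add: lambda_n_def split: if_splits)
  hence "a 0 = a m - int n * (int n - 1)" using lm by (simp add: lambda_n_def)
  moreover have "int n dvd a m" using z by (simp add: mod_eq_0_iff_dvd)
  moreover have "int n dvd int n * (int n - 1)" by simp
  ultimately have "int n dvd a 0" using dvd_diff by metis
  hence "a 0 mod int n = 0" by (simp add: mod_eq_0_iff_dvd)
  with z show ?thesis by (simp add: m_def)
qed

end
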